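(* Let $d$ be a feasible integer and let $\{\zeta_i\}_{i=0}^d$ be any sequence of scalars in $\mathbb F$ with $\zeta_0=1$. Then there exists a standard $U_q(\widehat{\mathfrak{sl}}_2)$-module $V$ of diameter $d$ whose split sequence is $\{\zeta_i\}_{i=0}^d$.
   Context: Let $\mathbb F$ be an algebraically closed field and fix nonzero $q\in\mathbb F$ with $q^2\ne1$; write $[n]_q=(q^n-q^{-n})/(q-q^{-1})$. $U_q(\widehat{\mathfrak{sl}}_2)$ is the associative unital $\mathbb F$-algebra with generators $e_i^{\pm},K_i^{\pm1}$ ($i\in\{0,1\}$) and relations $K_iK_i^{-1}=K_i^{-1}K_i=1$, $K_0K_1=K_1K_0$, $K_ie_i^{\pm}K_i^{-1}=q^{\pm2}e_i^{\pm}$, $K_ie_j^{\pm}K_i^{-1}=q^{\mp2}e_j^{\pm}$ ($i\ne j$), $e_i^+e_i^--e_i^-e_i^+=(K_i-K_i^{-1})/(q-q^{-1})$, $e_0^{\pm}e_1^{\mp}=e_1^{\mp}e_0^{\pm}$, and $(e_i^\pm)^3e_j^\pm-[3]_q(e_i^\pm)^2e_j^\pm e_i^\pm+[3]_qe_i^\pm e_j^\pm(e_i^\pm)^2-e_j^\pm(e_i^\pm)^3=0$ ($i\ne j$). Tensor products of modules are formed via $e_i^+(v\otimes w)=e_i^+v\otimes K_iw+v\otimes e_i^+w$, $e_i^-(v\otimes w)=e_i^-v\otimes w+K_i^{-1}v\otimes e_i^-w$, $K_i(v\otimes w)=K_iv\otimes K_iw$. For nonzero $\alpha\in\mathbb F$,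 $V(\alpha)$ is the module with basis $x,y$ and $K_1x=qx$, $K_1y=q^{-1}y$, $e_1^-x=y$, $e_1^-y=0$, $e_1^+x=0$, $e_1^+y=x$, $K_0x=q^{-1}x$, $K_0y=qy$, $e_0^-x=0$, $e_0^-y=q\alpha^{-1}x$, $e_0^+x=q^{-1}\alpha y$, $e_0^+y=0$. A standard module of diameter $d$ is $V(\alpha_1)\otimes\cdots\otimes V(\alpha_d)$ with all $\alpha_i\in\mathbb F$ nonzero (for $d=0$: the trivial module, on which each $e_i^\pm$ acts as $0$ and each $K_i^{\pm1}$ as $1$). An integer $d$ is feasible if $d\ge0$ and $q^{2i}\ne1$ for $1\le i\le d$. For a standard $V$ of diameter $d$ and $0\le i\le d$, $U_i$ is the span of the basis vectors $v_1\otimes\cdots\otimes v_d$ ($v_k\in\{x,y\}$) with exactly $i$ factors equal to $y$. Fix nonzero $b,c,b^*,c^*\in\mathbb F$ and $u,v,u^*,v^*\in\mathbb F$ with $uv^*=-bb^*q^{-1}(q-q^{-1})^2$ and $vu^*=-cc^*q^{-1}(q-q^{-1})^2$; set $R=ue_0^++ve_1^-K_1$ and $L=u^*e_1^++v^*e_0^-K_0$. For a standard $V$ of feasible diameter $d$ and $0\le i\le d$, $L^iR^i$ maps the $1$-dimensional space $U_0$ into itself; the scalar $\zeta_i$ by which it acts there defines the split sequence $\{\zeta_i\}_{i=0}^d$ of $V$ (so $\zeta_0=1$). *)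

theory Defs
  imports "HOL-Computational_Algebra.Polynomial"
begin

text \<open>Vectors of a standard module V(alpha_1) (x) ... (x) V(alpha_d) are represented by
  their coefficient functions on the basis v_1 (x) ... (x) v_d, indexed by boolean lists
  of length d (False = x, True = y). Only the values on lists of length d matter.
  A 2x2 matrix M :: bool => bool => 'a acting on V(alpha) has entry M r c = coefficient
  of basis vector r in the image of basis vector c.\<close>

definition tens :: "(bool \<Rightarrow> bool \<Rightarrow> 'a::comm_ring_1)
    \<Rightarrow> ((bool list \<Rightarrow> 'a) \<Rightarrow> (bool list \<Rightarrow> 'a))
    \<Rightarrow> (bool list \<Rightarrow> 'a) \<Rightarrow> (bool list \<Rightarrow> 'a)" where
  "tens A B w = (\<lambda>l. case l of [] \<Rightarrow> 0
      | h # t \<Rightarrow> (\<Sum>h'\<in>UNIV. A h h' * B (\<lambda>t'. w (h' # t')) t))"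

definition idmat :: "bool \<Rightarrow> bool \<Rightarrow> 'a::comm_ring_1" where
  "idmat r c = (if r = c then 1 else 0)"

definition Kmat :: "nat \<Rightarrow> 'a::field \<Rightarrow> bool \<Rightarrow> bool \<Rightarrow> 'a" where
  "Kmat i q r c = (if r \<noteq> c then 0
     else if i = 1 then (if r then inverse q else q)
     else (if r then q else inverse q))"

definition Kinvmat :: "nat \<Rightarrow> 'a::field \<Rightarrow> bool \<Rightarrow> bool \<Rightarrow> 'a" where
  "Kinvmat i q r c = (if r \<noteq> c then 0
     else if i = 1 then (if r then q else inverse q)
     else (if r then inverse q else q))"

text \<open>e_i^+ : e_1^+ y = x, e_1^+ x = 0; e_0^+ x = q^{-1} alpha y, e_0^+ y = 0.\<close>
definition epmat :: "nat \<Rightarrow> 'a::field \<Rightarrow> 'a \<Rightarrow> bool \<Rightarrow> bool \<Rightarrow> 'a" where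
  "epmat i q \<alpha> r c = (if i = 1 then (if \<not> r \<and> c then 1 else 0)
     else (if r \<and> \<not> c then inverse q * \<alpha> else 0))"

text \<open>e_i^- : e_1^- x = y, e_1^- y = 0; e_0^- y = q alpha^{-1} x, e_0^- x = 0.\<close>
definition emmat :: "nat \<Rightarrow> 'a::field \<Rightarrow> 'a \<Rightarrow> bool \<Rightarrow> bool \<Rightarrow> 'a" where
  "emmat i q \<alpha> r c = (if i = 1 then (if r \<and> \<not> c then 1 else 0)
     else (if \<not> r \<and> c then q * inverse \<alpha> else 0))"

text \<open>Action on V(alpha_1) (x) (V(alpha_2) (x) ... ) via the given coproduct;
  the empty list of parameters is the trivial module (diameter 0).\<close>
fun Kop :: "nat \<Rightarrow> 'a::field \<Rightarrow> 'a list \<Rightarrow> (bool list \<Rightarrow> 'a) \<Rightarrow> (bool list \<Rightarrow> 'a)" where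
  "Kop i q [] w = w"
| "Kop i q (\<alpha> # as) w = tens (Kmat i q) (Kop i q as) w"

fun Kinvop :: "nat \<Rightarrow> 'a::field \<Rightarrow> 'a list \<Rightarrow> (bool list \<Rightarrow> 'a) \<Rightarrow> (bool list \<Rightarrow> 'a)" where
  "Kinvop i q [] w = w"
| "Kinvop i q (\<alpha> # as) w = tens (Kinvmat i q) (Kinvop i q as) w"

fun Epop :: "nat \<Rightarrow> 'a::field \<Rightarrow> 'a list \<Rightarrow> (bool list \<Rightarrow> 'a) \<Rightarrow> (bool list \<Rightarrow> 'a)" where
  "Epop i q [] w = (\<lambda>_. 0)"
| "Epop i q (\<alpha> # as) w =
     (\<lambda>l. tens (epmat i q \<alpha>) (Kop i q as) w l + tens idmat (Epop i q as) w l)"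

fun Emop :: "nat \<Rightarrow> 'a::field \<Rightarrow> 'a list \<Rightarrow> (bool list \<Rightarrow> 'a) \<Rightarrow> (bool list \<Rightarrow> 'a)" where
  "Emop i q [] w = (\<lambda>_. 0)"
| "Emop i q (\<alpha> # as) w =
     (\<lambda>l. tens (emmat i q \<alpha>) (\<lambda>z. z) w l + tens (Kinvmat i q) (Emop i q as) w l)"

definition Rop :: "'a::field \<Rightarrow> 'a \<Rightarrow> 'a \<Rightarrow> 'a list \<Rightarrow> (bool list \<Rightarrow> 'a) \<Rightarrow> (bool list \<Rightarrow> 'a)" where
  "Rop q u v as w = (\<lambda>l. u * Epop 0 q as w l + v * Emop 1 q as (Kop 1 q as w) l)"

definition Lop :: "'a::field \<Rightarrow> 'a \<Rightarrow> 'a \<Rightarrow> 'a list \<Rightarrow> (bool list \<Rightarrow> 'a) \<Rightarrow> (bool list \<Rightarrow> 'a)" where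
  "Lop q us vs as w = (\<lambda>l. us * Epop 1 q as w l + vs * Emop 0 q as (Kop 0 q as w) l)"

definition xvec :: "'a list \<Rightarrow> bool list \<Rightarrow> 'b::zero_neq_one" where
  "xvec as l = (if l = replicate (length as) False then 1 else 0)"

text \<open>Split sequence: zeta_i is the scalar by which L^i R^i acts on U_0, i.e. the
  x(x)...(x)x-coefficient of L^i R^i (x(x)...(x)x).\<close>
definition split_seq :: "'a::field \<Rightarrow> 'a \<Rightarrow> 'a \<Rightarrow> 'a \<Rightarrow> 'a \<Rightarrow> 'a list \<Rightarrow> nat \<Rightarrow> 'a" where
  "split_seq q u v us vs as i =
     ((Lop q us vs as ^^ i) ((Rop q u v as ^^ i) (xvec as)))
       (replicate (length as) False)"

definition feasible :: "'a::field \<Rightarrow> nat \<Rightarrow> bool" where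
  "feasible q d = (\<forall>i. 1 \<le> i \<and> i \<le> d \<longrightarrow> q ^ (2 * i) \<noteq> 1)"

end

theory Submission
  imports Defs
begin

lemma tens_Nil[simp]: "tens A B w [] = 0" by (simp add: tens_def)
lemma tens_Cons[simp]: "tens A B w (h#t) = A h False * B (\<lambda>t'. w (False#t')) t + A h True * B (\<lambda>t'. w (True#t')) t"
  by (simp add: tens_def UNIV_bool)

definition cnt :: "bool list \<Rightarrow> nat" where "cnt l = length (filter id l)"
definition cntF :: "bool list \<Rightarrow> nat" where "cntF l = length (filter Not l)"
lemma cnt_simps[simp]: "cnt [] = 0" "cnt (True#t) = Suc (cnt t)" "cnt (False#t) = cnt t"
  "cntF [] = 0" "cntF (True#t) = cntF t" "cntF (False#t) = Suc (cntF t)"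
  by (simp_all add: cnt_def cntF_def)
lemma cnt_cntF: "cnt l + cntF l = length l" by (induction l) (auto simp: cnt_def cntF_def)
lemma cnt_le: "cnt l \<le> length l" using cnt_cntF[of l] by linarith

definition wt :: "nat \<Rightarrow> int \<Rightarrow> (bool list \<Rightarrow> 'a::zero) \<Rightarrow> bool" where
  "wt n k w \<longleftrightarrow> (\<forall>l. w l \<noteq> 0 \<longrightarrow> length l = n \<and> int (cnt l) = k)"

definition lin :: "((bool list \<Rightarrow> 'a::comm_ring_1) \<Rightarrow> (bool list \<Rightarrow> 'a)) \<Rightarrow> bool" where
  "lin F \<longleftrightarrow> (\<forall>f g. F (\<lambda>l. f l + g l) = (\<lambda>l. F f l + F g l)) \<and> (\<forall>c f. F (\<lambda>l. c * f l) = (\<lambda>l. c * F f l))"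

lemma lin_add: "lin F \<Longrightarrow> F (\<lambda>l. f l + g l) = (\<lambda>l. F f l + F g l)" by (simp add: lin_def)
lemma lin_smult: "lin F \<Longrightarrow> F (\<lambda>l. c * f l) = (\<lambda>l. c * F f l)" by (simp add: lin_def)
lemma lin_zero: "lin F \<Longrightarrow> F (\<lambda>l. 0) = (\<lambda>l. 0)"
  using lin_smult[of F 0 "\<lambda>l. 0"] by simp

lemma lin_tens: "lin B \<Longrightarrow> lin (tens A B)"
  unfolding lin_def
  apply (intro conjI allI; rule ext)
  subgoal for f g l by (cases l) (simp_all add: algebra_simps)
  subgoal for c f l by (cases l) (simp_all add: algebra_simps)
  done

lemma lin_id: "lin (\<lambda>z. z)" by (simp add: lin_def)

lemma lin_Kop: "lin (Kop i q as)"
  by (induction as) (simp_all add: lin_id lin_tens)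

lemma lin_Epop: "lin (Epop i q as)"
proof (induction as)
  case Nil show ?case by (simp add: lin_def)
next
  case (Cons a as)
  have 1: "lin (tens (epmat i q a) (Kop i q as))" by (rule lin_tens[OF lin_Kop])
  have 2: "lin (tens idmat (Epop i q as))" by (rule lin_tens[OF Cons])
  show ?case using 1 2 unfolding lin_def by (simp add: algebra_simps)
qed

lemma lin_Emop: "lin (Emop i q as)"
proof (induction as)
  case Nil show ?case by (simp add: lin_def)
next
  case (Cons a as)
  have 1: "lin (tens (emmat i q a) (\<lambda>z. z))" by (rule lin_tens[OF lin_id])
  have 2: "lin (tens (Kinvmat i q) (Emop i q as))" by (rule lin_tens[OF Cons])
  show ?case using 1 2 unfolding lin_def by (simp add: algebra_simps)
qed

lemma lin_Rop: "lin (Rop q u v as)"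
  using lin_Epop[of 0 q as] lin_Emop[of 1 q as] lin_Kop[of 1 q as]
  unfolding lin_def Rop_def by (simp add: algebra_simps)

lemma lin_Lop: "lin (Lop q u v as)"
  using lin_Epop[of 1 q as] lin_Emop[of 0 q as] lin_Kop[of 0 q as]
  unfolding lin_def Lop_def by (simp add: algebra_simps)

lemma lin_pow: "lin F \<Longrightarrow> lin (F ^^ m)"
  by (induction m) (simp_all add: lin_id[unfolded id_def[symmetric]] lin_def)

lemma Kop_nz: "Kop i q as w l \<noteq> 0 \<Longrightarrow> w l \<noteq> 0"
proof (induction as arbitrary: w l)
  case Nil then show ?case by simp
next
  case (Cons a as)
  then show ?case
    by (cases l) (auto simp: Kmat_def split: if_splits)
qed

lemma Kop1_val: "length l = length as \<Longrightarrow>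
   Kop 1 q as w l = q ^ cntF l * inverse q ^ cnt l * w l"
proof (induction as arbitrary: w l)
  case Nil then show ?case by simp
next
  case (Cons a as)
  then obtain h t where l: "l = h # t" by (cases l) auto
  with Cons show ?case by (cases h) (auto simp: Kmat_def)
qed

lemma Kop0_val: "length l = length as \<Longrightarrow>
   Kop 0 q as w l = inverse q ^ cntF l * q ^ cnt l * w l"
proof (induction as arbitrary: w l)
  case Nil then show ?case by simp
next
  case (Cons a as)
  then obtain h t where l: "l = h # t" by (cases l) auto
  with Cons show ?case by (cases h) (auto simp: Kmat_def)
qed

definition K1f :: "'a::field \<Rightarrow> nat \<Rightarrow> nat \<Rightarrow> 'a" where "K1f q n k = q ^ (n - k) * inverse q ^ k"
definition K0f :: "'a::field \<Rightarrow> nat \<Rightarrow> nat \<Rightarrow> 'a" where "K0f q n k = inverse q ^ (n - k) * q ^ k"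

lemma Kop1_wt: assumes "wt (length as) (int k) w"
  shows "Kop 1 q as w = (\<lambda>l. K1f q (length as) k * w l)"
proof
  fix l show "Kop 1 q as w l = K1f q (length as) k * w l"
  proof (cases "w l = 0")
    case True then show ?thesis using Kop_nz[of 1 q as w l] by auto
  next
    case False
    with assms have "length l = length as" "cnt l = k" by (auto simp: wt_def)
    moreover have "cntF l = length l - cnt l" using cnt_cntF[of l] by linarith
    ultimately show ?thesis using Kop1_val[of l as q w] by (simp add: K1f_def)
  qed
qed

lemma Kop0_wt: assumes "wt (length as) (int k) w"
  shows "Kop 0 q as w = (\<lambda>l. K0f q (length as) k * w l)"
proof
  fix l show "Kop 0 q as w l = K0f q (length as) k * w l"
  proof (cases "w l = 0")
    case True then show ?thesis using Kop_nz[of 0 q as w l] by auto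
  next
    case False
    with assms have "length l = length as" "cnt l = k" by (auto simp: wt_def)
    moreover have "cntF l = length l - cnt l" using cnt_cntF[of l] by linarith
    ultimately show ?thesis using Kop0_val[of l as q w] by (simp add: K0f_def)
  qed
qed

lemma wt_F: "wt (Suc n) k w \<Longrightarrow> wt n k (\<lambda>t. w (False#t))"
  by (auto simp: wt_def)
lemma wt_T: "wt (Suc n) k w \<Longrightarrow> wt n (k - 1) (\<lambda>t. w (True#t))"
  unfolding wt_def by force
lemma wt_Kop: "wt n k w \<Longrightarrow> wt n k (Kop i q as w)"
  using Kop_nz unfolding wt_def by blast
lemma wt_add: "wt n k f \<Longrightarrow> wt n k g \<Longrightarrow> wt n k (\<lambda>l. (f l::'a::comm_ring_1) + g l)"
  unfolding wt_def by (metis add.left_neutral)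
lemma wt_smult: "wt n k f \<Longrightarrow> wt n k (\<lambda>l. (c::'a::comm_ring_1) * f l)"
  unfolding wt_def
proof (intro allI impI)
  fix l assume a: "\<forall>l. f l \<noteq> 0 \<longrightarrow> length l = n \<and> int (cnt l) = k" and b: "c * f l \<noteq> 0"
  from b have "f l \<noteq> 0" by auto
  with a show "length l = n \<and> int (cnt l) = k" by blast
qed
lemma wt_zero: "wt n k (\<lambda>l. 0)" by (simp add: wt_def)
lemma wt_xvec: "wt (length as) 0 (xvec as)"
  by (auto simp: wt_def xvec_def cnt_def)
lemma wt_big: "wt n k w \<Longrightarrow> k > int n \<Longrightarrow> w l = 0"

  proof (rule ccontr)
  assume "wt n k w" "k > int n" "w l \<noteq> 0"
  then have "length l = n" "int (cnt l) = k" by (auto simp: wt_def)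
  with cnt_le[of l] \<open>k > int n\<close> show False by linarith
qed

lemma wt_Epop0: "wt (length as) k w \<Longrightarrow> wt (length as) (k+1) (Epop 0 q as w)"
proof (induction as arbitrary: w k)
  case Nil then show ?case by (simp add: wt_zero)
next
  case (Cons a as)
  have F: "wt (length as) k (\<lambda>t. w (False#t))" using wt_F Cons.prems by simp
  have T: "wt (length as) (k-1) (\<lambda>t. w (True#t))" using wt_T Cons.prems by simp
  have IF: "wt (length as) (k+1) (Epop 0 q as (\<lambda>t. w (False#t)))" using Cons.IH[OF F] .
  have IT: "wt (length as) k (Epop 0 q as (\<lambda>t. w (True#t)))" using Cons.IH[OF T] by simp
  show ?case unfolding wt_def
  proof (intro allI impI)
    fix l assume nz: "Epop 0 q (a # as) w l \<noteq> 0"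
    then obtain h t where l: "l = h # t" by (cases l) auto
    show "length l = length (a # as) \<and> int (cnt l) = k + 1"
    proof (cases h)
      case True
      with nz l have "Kop 0 q as (\<lambda>t. w (False#t)) t \<noteq> 0 \<or> Epop 0 q as (\<lambda>t. w (True#t)) t \<noteq> 0"
        by (auto simp: epmat_def idmat_def)
      then show ?thesis
      proof
        assume "Kop 0 q as (\<lambda>t. w (False#t)) t \<noteq> 0"
        then have "w (False#t) \<noteq> 0" using Kop_nz by fastforce
        with Cons.prems show ?thesis using l True by (auto simp: wt_def)
      next
        assume "Epop 0 q as (\<lambda>t. w (True#t)) t \<noteq> 0"
        with IT show ?thesis using l True by (auto simp: wt_def)
      qed
    next
      case False
      with nz l have "Epop 0 q as (\<lambda>t. w (False#t)) t \<noteq> 0"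
        by (auto simp: epmat_def idmat_def)
      with IF show ?thesis using l False by (auto simp: wt_def)
    qed
  qed
qed

lemma wt_Emop1: "wt (length as) k w \<Longrightarrow> wt (length as) (k+1) (Emop 1 q as w)"
proof (induction as arbitrary: w k)
  case Nil then show ?case by (simp add: wt_zero)
next
  case (Cons a as)
  have F: "wt (length as) k (\<lambda>t. w (False#t))" using wt_F Cons.prems by simp
  have T: "wt (length as) (k-1) (\<lambda>t. w (True#t))" using wt_T Cons.prems by simp
  have IF: "wt (length as) (k+1) (Emop 1 q as (\<lambda>t. w (False#t)))" using Cons.IH[OF F] .
  have IT: "wt (length as) k (Emop 1 q as (\<lambda>t. w (True#t)))" using Cons.IH[OF T] by simp
  show ?case unfolding wt_def
  proof (intro allI impI)
    fix l assume nz: "Emop 1 q (a # as) w l \<noteq> 0"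
    then obtain h t where l: "l = h # t" by (cases l) auto
    show "length l = length (a # as) \<and> int (cnt l) = k + 1"
    proof (cases h)
      case True
      with nz l have "w (False#t) \<noteq> 0 \<or> Emop 1 q as (\<lambda>t. w (True#t)) t \<noteq> 0"
        by (auto simp: emmat_def Kinvmat_def)
      then show ?thesis
      proof
        assume "w (False#t) \<noteq> 0"
        with Cons.prems show ?thesis using l True by (auto simp: wt_def)
      next
        assume "Emop 1 q as (\<lambda>t. w (True#t)) t \<noteq> 0"
        with IT show ?thesis using l True by (auto simp: wt_def)
      qed
    next
      case False
      with nz l have "Emop 1 q as (\<lambda>t. w (False#t)) t \<noteq> 0"
        by (auto simp: emmat_def Kinvmat_def)
      with IF show ?thesis using l False by (auto simp: wt_def)
    qed
  qed
qed

lemma wt_Epop1: "wt (length as) k w \<Longrightarrow> wt (length as) (k-1) (Epop 1 q as w)"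
proof (induction as arbitrary: w k)
  case Nil then show ?case by (simp add: wt_zero)
next
  case (Cons a as)
  have F: "wt (length as) k (\<lambda>t. w (False#t))" using wt_F Cons.prems by simp
  have T: "wt (length as) (k-1) (\<lambda>t. w (True#t))" using wt_T Cons.prems by simp
  have IF: "wt (length as) (k-1) (Epop 1 q as (\<lambda>t. w (False#t)))" using Cons.IH[OF F] .
  have IT: "wt (length as) (k-1-1) (Epop 1 q as (\<lambda>t. w (True#t)))" using Cons.IH[OF T] by simp
  show ?case unfolding wt_def
  proof (intro allI impI)
    fix l assume nz: "Epop 1 q (a # as) w l \<noteq> 0"
    then obtain h t where l: "l = h # t" by (cases l) auto
    show "length l = length (a # as) \<and> int (cnt l) = k - 1"
    proof (cases h)
      case False
      with nz l have "Kop 1 q as (\<lambda>t. w (True#t)) t \<noteq> 0 \<or> Epop 1 q as (\<lambda>t. w (False#t)) t \<noteq> 0"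
        by (auto simp: epmat_def idmat_def)
      then show ?thesis
      proof
        assume "Kop 1 q as (\<lambda>t. w (True#t)) t \<noteq> 0"
        then have "w (True#t) \<noteq> 0" using Kop_nz by fastforce
        with Cons.prems show ?thesis using l False by (auto simp: wt_def)
      next
        assume "Epop 1 q as (\<lambda>t. w (False#t)) t \<noteq> 0"
        with IF show ?thesis using l False by (auto simp: wt_def)
      qed
    next
      case True
      with nz l have "Epop 1 q as (\<lambda>t. w (True#t)) t \<noteq> 0"
        by (auto simp: epmat_def idmat_def)
      with IT show ?thesis using l True by (auto simp: wt_def)
    qed
  qed
qed

lemma wt_Emop0: "wt (length as) k w \<Longrightarrow> wt (length as) (k-1) (Emop 0 q as w)"
proof (induction as arbitrary: w k)
  case Nil then show ?case by (simp add: wt_zero)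
next
  case (Cons a as)
  have F: "wt (length as) k (\<lambda>t. w (False#t))" using wt_F Cons.prems by simp
  have T: "wt (length as) (k-1) (\<lambda>t. w (True#t))" using wt_T Cons.prems by simp
  have IF: "wt (length as) (k-1) (Emop 0 q as (\<lambda>t. w (False#t)))" using Cons.IH[OF F] .
  have IT: "wt (length as) (k-1-1) (Emop 0 q as (\<lambda>t. w (True#t)))" using Cons.IH[OF T] by simp
  show ?case unfolding wt_def
  proof (intro allI impI)
    fix l assume nz: "Emop 0 q (a # as) w l \<noteq> 0"
    then obtain h t where l: "l = h # t" by (cases l) auto
    show "length l = length (a # as) \<and> int (cnt l) = k - 1"
    proof (cases h)
      case False
      with nz l have "w (True#t) \<noteq> 0 \<or> Emop 0 q as (\<lambda>t. w (False#t)) t \<noteq> 0"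
        by (auto simp: emmat_def Kinvmat_def)
      then show ?thesis
      proof
        assume "w (True#t) \<noteq> 0"
        with Cons.prems show ?thesis using l False by (auto simp: wt_def)
      next
        assume "Emop 0 q as (\<lambda>t. w (False#t)) t \<noteq> 0"
        with IF show ?thesis using l False by (auto simp: wt_def)
      qed
    next
      case True
      with nz l have "Emop 0 q as (\<lambda>t. w (True#t)) t \<noteq> 0"
        by (auto simp: emmat_def Kinvmat_def)
      with IT show ?thesis using l True by (auto simp: wt_def)
    qed
  qed
qed

lemma wt_Rop: "wt (length as) k w \<Longrightarrow> wt (length as) (k+1) (Rop q u v as w)"
  unfolding Rop_def
  by (intro wt_add wt_smult wt_Epop0 wt_Emop1 wt_Kop)

lemma wt_Lop: "wt (length as) k w \<Longrightarrow> wt (length as) (k-1) (Lop q u v as w)"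
  unfolding Lop_def
  by (intro wt_add wt_smult wt_Epop1 wt_Emop0 wt_Kop)

lemma wt_Rpow: "wt (length as) k w \<Longrightarrow> wt (length as) (k + int m) ((Rop q u v as ^^ m) w)"
proof (induction m)
  case (Suc m)
  then show ?case using wt_Rop[OF Suc.IH[OF Suc.prems], of q u v] by (simp add: algebra_simps)
qed simp

lemma wt_Lpow: "wt (length as) k w \<Longrightarrow> wt (length as) (k - int m) ((Lop q u v as ^^ m) w)"
proof (induction m)
  case (Suc m)
  then show ?case using wt_Lop[OF Suc.IH[OF Suc.prems], of q u v] by (simp add: algebra_simps)
qed simp

lemmas lin_simps = lin_smult[OF lin_Emop] lin_smult[OF lin_Epop] lin_smult[OF lin_Kop]

lemma R_F: "q \<noteq> 0 \<Longrightarrow> Rop q u v (a#as) w (False#t) = Rop q u v as (\<lambda>t. w (False#t)) t"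
  by (simp add: Rop_def Kmat_def Kinvmat_def emmat_def epmat_def idmat_def lin_simps)

lemma R_T: "q \<noteq> 0 \<Longrightarrow> Rop q u v (a#as) w (True#t) = u * inverse q * a * Kop 0 q as (\<lambda>t. w (False#t)) t
    + v * q * Kop 1 q as (\<lambda>t. w (False#t)) t + Rop q u v as (\<lambda>t. w (True#t)) t"
  by (simp add: Rop_def Kmat_def Kinvmat_def emmat_def epmat_def idmat_def lin_simps algebra_simps)

lemma L_F: "q \<noteq> 0 \<Longrightarrow> Lop q us vs (a#as) w (False#t) = Lop q us vs as (\<lambda>t. w (False#t)) t
    + us * Kop 1 q as (\<lambda>t. w (True#t)) t + vs * q * q * inverse a * Kop 0 q as (\<lambda>t. w (True#t)) t"
  by (simp add: Lop_def Kmat_def Kinvmat_def emmat_def epmat_def idmat_def lin_simps algebra_simps)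

lemma L_T: "q \<noteq> 0 \<Longrightarrow> Lop q us vs (a#as) w (True#t) = Lop q us vs as (\<lambda>t. w (True#t)) t"
  by (simp add: Lop_def Kmat_def Kinvmat_def emmat_def epmat_def idmat_def lin_simps algebra_simps)

definition SA :: "'a::field \<Rightarrow> 'a \<Rightarrow> 'a \<Rightarrow> 'a \<Rightarrow> nat \<Rightarrow> nat \<Rightarrow> 'a" where
  "SA q u v a n i = (\<Sum>k<i. u * inverse q * a * K0f q n k + v * q * K1f q n k)"

lemma Rpow:
  assumes q: "q \<noteq> 0"
  shows "(\<lambda>t. (Rop q u v (a#as) ^^ i) (xvec (a#as)) (False#t)) = (Rop q u v as ^^ i) (xvec as) \<and>
    (\<lambda>t. (Rop q u v (a#as) ^^ i) (xvec (a#as)) (True#t)) = (\<lambda>t. SA q u v a (length as) i * (Rop q u v as ^^ (i-1)) (xvec as) t)"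
proof (induction i)
  case 0 show ?case by (simp add: xvec_def SA_def fun_eq_iff)
next
  case (Suc i)
  define P where "P = (Rop q u v (a#as) ^^ i) (xvec (a#as))"
  define x where "x = (xvec as :: bool list \<Rightarrow> 'a)"
  from Suc.IH have PF: "(\<lambda>t. P (False#t)) = (Rop q u v as ^^ i) x"
    and PT: "(\<lambda>t. P (True#t)) = (\<lambda>t. SA q u v a (length as) i * (Rop q u v as ^^ (i-1)) x t)"
    unfolding P_def x_def by auto
  have wi: "wt (length as) (int i) ((Rop q u v as ^^ i) x)"
    using wt_Rpow[OF wt_xvec[of as], where q=q and u=u and v=v and m=i] by (simp add: x_def)
  have step: "(Rop q u v (a#as) ^^ Suc i) (xvec (a#as)) = Rop q u v (a#as) P"
    by (simp add: P_def)
  have F: "(\<lambda>t. Rop q u v (a#as) P (False#t)) = (Rop q u v as ^^ Suc i) x"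
  proof
    fix t
    have "Rop q u v (a#as) P (False#t) = Rop q u v as (\<lambda>t. P (False#t)) t" by (rule R_F[OF q])
    also have "\<dots> = (Rop q u v as ^^ Suc i) x t" using PF by simp
    finally show "Rop q u v (a#as) P (False#t) = (Rop q u v as ^^ Suc i) x t" .
  qed
  have Rsh: "Rop q u v as (\<lambda>t. SA q u v a (length as) i * (Rop q u v as ^^ (i-1)) x t)
      = (\<lambda>t. SA q u v a (length as) i * (Rop q u v as ^^ i) x t)"
  proof (cases i)
    case 0 then show ?thesis by (simp add: SA_def lin_zero[OF lin_Rop] fun_eq_iff)
  next
    case (Suc j) then show ?thesis by (simp add: lin_smult[OF lin_Rop])
  qed
  have T: "(\<lambda>t. Rop q u v (a#as) P (True#t)) = (\<lambda>t. SA q u v a (length as) (Suc i) * (Rop q u v as ^^ (Suc i - 1)) x t)"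
  proof
    fix t
    have "Rop q u v (a#as) P (True#t) = u * inverse q * a * Kop 0 q as (\<lambda>t. P (False#t)) t
      + v * q * Kop 1 q as (\<lambda>t. P (False#t)) t + Rop q u v as (\<lambda>t. P (True#t)) t" by (rule R_T[OF q])
    also have "\<dots> = u * inverse q * a * (K0f q (length as) i * (Rop q u v as ^^ i) x t)
      + v * q * (K1f q (length as) i * (Rop q u v as ^^ i) x t) + SA q u v a (length as) i * (Rop q u v as ^^ i) x t"
      unfolding PF PT Rsh Kop0_wt[OF wi] Kop1_wt[OF wi] by simp
    also have "\<dots> = SA q u v a (length as) (Suc i) * (Rop q u v as ^^ (Suc i - 1)) x t"
      by (simp add: SA_def algebra_simps)
    finally show "Rop q u v (a#as) P (True#t) = SA q u v a (length as) (Suc i) * (Rop q u v as ^^ (Suc i - 1)) x t" .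
  qed
  show ?case using F T unfolding step x_def by simp
qed

definition SB :: "'a::field \<Rightarrow> 'a \<Rightarrow> 'a \<Rightarrow> 'a \<Rightarrow> nat \<Rightarrow> nat \<Rightarrow> nat \<Rightarrow> 'a" where
  "SB q us vs a n j m = (\<Sum>k<m. us * K1f q n (j - k) + vs * q * q * inverse a * K0f q n (j - k))"

lemma Lpow:
  assumes q: "q \<noteq> 0" and wT: "wt (length as) (int j) (\<lambda>t. V (True#t))"
  shows "m \<le> Suc j \<Longrightarrow> (\<lambda>t. (Lop q us vs (a#as) ^^ m) V (False#t)) =
       (\<lambda>t. (Lop q us vs as ^^ m) (\<lambda>t. V (False#t)) t + SB q us vs a (length as) j m * (Lop q us vs as ^^ (m-1)) (\<lambda>t. V (True#t)) t) \<and>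
    (\<lambda>t. (Lop q us vs (a#as) ^^ m) V (True#t)) = (Lop q us vs as ^^ m) (\<lambda>t. V (True#t))"
proof (induction m)
  case 0 show ?case by (simp add: SB_def)
next
  case (Suc m)
  define P where "P = (Lop q us vs (a#as) ^^ m) V"
  define vF where "vF = (\<lambda>t. V (False#t))"
  define vT where "vT = (\<lambda>t. V (True#t))"
  define L where "L = Lop q us vs as"
  define c where "c = SB q us vs a (length as) j m"
  from Suc have PF: "(\<lambda>t. P (False#t)) = (\<lambda>t. (L ^^ m) vF t + c * (L ^^ (m-1)) vT t)"
    and PT: "(\<lambda>t. P (True#t)) = (L ^^ m) vT"
    unfolding P_def vF_def vT_def L_def c_def by auto
  have mj: "m \<le> j" using Suc.prems by simp
  have wm: "wt (length as) (int (j - m)) ((L ^^ m) vT)"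
    using wt_Lpow[OF wT, where q=q and u=us and v=vs and m=m] mj unfolding L_def vT_def
    by (simp add: of_nat_diff)
  have step: "(Lop q us vs (a#as) ^^ Suc m) V = Lop q us vs (a#as) P"
    by (simp add: P_def)
  have linL: "lin L" unfolding L_def by (rule lin_Lop)
  have Lsh: "L (\<lambda>t. (L ^^ m) vF t + c * (L ^^ (m-1)) vT t) = (\<lambda>t. (L ^^ Suc m) vF t + c * (L ^^ m) vT t)"
  proof (cases m)
    case 0 then show ?thesis by (simp add: c_def SB_def lin_add[OF linL] lin_smult[OF linL])
  next
    case (Suc k) then show ?thesis by (simp add: lin_add[OF linL] lin_smult[OF linL])
  qed
  have F: "(\<lambda>t. Lop q us vs (a#as) P (False#t)) = (\<lambda>t. (L ^^ Suc m) vF t + SB q us vs a (length as) j (Suc m) * (L ^^ (Suc m - 1)) vT t)"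
  proof
    fix t
    have "Lop q us vs (a#as) P (False#t) = L (\<lambda>t. P (False#t)) t
      + us * Kop 1 q as (\<lambda>t. P (True#t)) t + vs * q * q * inverse a * Kop 0 q as (\<lambda>t. P (True#t)) t"
      unfolding L_def by (rule L_F[OF q])
    also have "\<dots> = (L ^^ Suc m) vF t + c * (L ^^ m) vT t
      + us * (K1f q (length as) (j - m) * (L ^^ m) vT t) + vs * q * q * inverse a * (K0f q (length as) (j - m) * (L ^^ m) vT t)"
      unfolding PF PT Lsh Kop0_wt[OF wm] Kop1_wt[OF wm] by simp
    also have "\<dots> = (L ^^ Suc m) vF t + SB q us vs a (length as) j (Suc m) * (L ^^ (Suc m - 1)) vT t"
      by (simp add: SB_def c_def algebra_simps)
    finally show "Lop q us vs (a#as) P (False#t) = (L ^^ Suc m) vF t + SB q us vs a (length as) j (Suc m) * (L ^^ (Suc m - 1)) vT t" .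
  qed
  have T: "(\<lambda>t. Lop q us vs (a#as) P (True#t)) = (L ^^ Suc m) vT"
  proof
    fix t
    have "Lop q us vs (a#as) P (True#t) = L (\<lambda>t. P (True#t)) t"
      unfolding L_def by (rule L_T[OF q])
    then show "Lop q us vs (a#as) P (True#t) = (L ^^ Suc m) vT t" unfolding PT by simp
  qed
  show ?case using F T unfolding step L_def vF_def vT_def by simp
qed

lemma split_rec:
  assumes q: "q \<noteq> 0" and i: "1 \<le> i"
  shows "split_seq q u v us vs (a#as) i = split_seq q u v us vs as i
     + SB q us vs a (length as) (i-1) i * SA q u v a (length as) i * split_seq q u v us vs as (i-1)"
proof -
  define V where "V = (Rop q u v (a#as) ^^ i) (xvec (a#as))"
  define x where "x = (xvec as :: bool list \<Rightarrow> 'a)"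
  define R where "R = Rop q u v as"
  define L where "L = Lop q us vs as"
  define sa where "sa = SA q u v a (length as) i"
  define sb where "sb = SB q us vs a (length as) (i-1) i"
  from Rpow[OF q, where u=u and v=v and a=a and as=as and i=i] have VF: "(\<lambda>t. V (False#t)) = (R ^^ i) x"
    and VT: "(\<lambda>t. V (True#t)) = (\<lambda>t. sa * (R ^^ (i-1)) x t)"
    unfolding V_def x_def R_def sa_def by auto
  have w: "wt (length as) (int (i-1)) (\<lambda>t. V (True#t))"
    unfolding VT R_def x_def
    using wt_smult[OF wt_Rpow[OF wt_xvec[of as], where q=q and u=u and v=v and m="i-1"]] by simp
  from Lpow[OF q w, where m=i and us=us and vs=vs] i
  have LF: "(\<lambda>t. (Lop q us vs (a#as) ^^ i) V (False#t)) = (\<lambda>t. (L ^^ i) ((R ^^ i) x) t + sb * (L ^^ (i-1)) (\<lambda>t. sa * (R ^^ (i-1)) x t) t)"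
    unfolding VF VT L_def sb_def by simp
  have linP: "lin (L ^^ (i-1))" unfolding L_def by (rule lin_pow[OF lin_Lop])
  have "split_seq q u v us vs (a#as) i = (Lop q us vs (a#as) ^^ i) V (False # replicate (length as) False)"
    by (simp add: split_seq_def V_def)
  also have "\<dots> = (L ^^ i) ((R ^^ i) x) (replicate (length as) False) + sb * (sa * (L ^^ (i-1)) ((R ^^ (i-1)) x) (replicate (length as) False))"
    using fun_cong[OF LF, of "replicate (length as) False"] lin_smult[OF linP] by simp
  also have "\<dots> = split_seq q u v us vs as i + sb * sa * split_seq q u v us vs as (i-1)"
    by (simp add: split_seq_def L_def R_def x_def)
  finally show ?thesis unfolding sa_def sb_def .
qed

lemma split_zero: "length as < i \<Longrightarrow> split_seq q u v us vs as i = 0"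
proof -
  assume a: "length as < i"
  have w: "wt (length as) (int i) ((Rop q u v as ^^ i) (xvec as))"
    using wt_Rpow[OF wt_xvec[of as], where q=q and u=u and v=v and m=i] by simp
  have "(Rop q u v as ^^ i) (xvec as) = (\<lambda>l. 0)"
    using wt_big[OF w] a by auto
  then show ?thesis by (simp add: split_seq_def lin_zero[OF lin_pow[OF lin_Lop]])
qed

lemma split_0: "split_seq q u v us vs as 0 = 1"
  by (simp add: split_seq_def xvec_def)

lemma K1f_eq: assumes q: "q \<noteq> 0" and k: "k \<le> n" shows "K1f q n k = q ^ n * (inverse q ^ 2) ^ k"
proof -
  have a: "(inverse q ^ 2) ^ k = inverse q ^ k * inverse q ^ k" by (simp add: power2_eq_square power_mult_distrib)
  have b: "q ^ n = q ^ (n-k) * q ^ k" using k by (simp add: power_add[symmetric])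
  have c: "q ^ k * inverse q ^ k = 1" using q by (simp add: power_mult_distrib[symmetric])
  have "q ^ n * (inverse q ^ 2) ^ k = q ^ (n-k) * (q ^ k * inverse q ^ k) * inverse q ^ k"
    unfolding a b by (simp add: algebra_simps)
  then show ?thesis unfolding c by (simp add: K1f_def)
qed

lemma K0f_eq: assumes q: "q \<noteq> 0" and k: "k \<le> n" shows "K0f q n k = inverse q ^ n * (q ^ 2) ^ k"
proof -
  have a: "(q ^ 2) ^ k = q ^ k * q ^ k" by (simp add: power2_eq_square power_mult_distrib)
  have b: "inverse q ^ n = inverse q ^ (n-k) * inverse q ^ k" using k by (simp add: power_add[symmetric])
  have c: "inverse q ^ k * q ^ k = 1" using q by (simp add: power_mult_distrib[symmetric])
  have "inverse q ^ n * (q ^ 2) ^ k = inverse q ^ (n-k) * (inverse q ^ k * q ^ k) * q ^ k"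
    unfolding a b by (simp add: algebra_simps)
  then show ?thesis unfolding c by (simp add: K0f_def)
qed

lemma geom_nz: "(x::'a::field) \<noteq> 1 \<Longrightarrow> x ^ i \<noteq> 1 \<Longrightarrow> (\<Sum>k<i. x ^ k) \<noteq> 0"
  by (simp add: geometric_sum)

lemma K1sum_nz: assumes q: "q \<noteq> 0" "q ^ 2 \<noteq> 1" and i: "i \<le> Suc n" "q ^ (2*i) \<noteq> 1"
  shows "(\<Sum>k<i. K1f q n k) \<noteq> 0"
proof -
  have "(\<Sum>k<i. K1f q n k) = (\<Sum>k<i. q ^ n * (inverse q ^ 2) ^ k)"
    using i by (intro sum.cong) (auto intro!: K1f_eq q)
  also have "\<dots> = q ^ n * (\<Sum>k<i. (inverse q ^ 2) ^ k)" by (simp add: sum_distrib_left)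
  finally have e: "(\<Sum>k<i. K1f q n k) = q ^ n * (\<Sum>k<i. (inverse q ^ 2) ^ k)" .
  have x1: "inverse q ^ 2 \<noteq> 1" using q by (metis inverse_1 inverse_inverse_eq power_inverse)
  have x2: "(inverse q ^ 2) ^ i \<noteq> 1" using i q
    by (metis inverse_1 inverse_inverse_eq power_inverse power_mult)
  show ?thesis using e geom_nz[OF x1 x2] q by simp
qed

lemma K0sum_nz: assumes q: "q \<noteq> 0" "q ^ 2 \<noteq> 1" and i: "i \<le> Suc n" "q ^ (2*i) \<noteq> 1"
  shows "(\<Sum>k<i. K0f q n k) \<noteq> 0"
proof -
  have "(\<Sum>k<i. K0f q n k) = (\<Sum>k<i. inverse q ^ n * (q ^ 2) ^ k)"
    using i by (intro sum.cong) (auto intro!: K0f_eq q)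
  also have "\<dots> = inverse q ^ n * (\<Sum>k<i. (q ^ 2) ^ k)" by (simp add: sum_distrib_left)
  finally have e: "(\<Sum>k<i. K0f q n k) = inverse q ^ n * (\<Sum>k<i. (q ^ 2) ^ k)" .
  have x2: "(q ^ 2) ^ i \<noteq> 1" using i q by (simp add: power_mult[symmetric])
  show ?thesis using e geom_nz[OF q(2) x2] q by simp
qed

lemma SA_eq: "SA q u v a n i = a * (u * inverse q * (\<Sum>k<i. K0f q n k)) + v * q * (\<Sum>k<i. K1f q n k)"
  by (simp add: SA_def sum.distrib sum_distrib_left algebra_simps)

lemma SB_eq: "SB q us vs a n (i-1) i = us * (\<Sum>k<i. K1f q n k) + vs * q * q * inverse a * (\<Sum>k<i. K0f q n k)"
proof -
  have "SB q us vs a n (i-1) i = (\<Sum>k<i. us * K1f q n (i - Suc k) + vs * q * q * inverse a * K0f q n (i - Suc k))"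
    unfolding SB_def by (intro sum.cong) (auto simp: Suc_diff_Suc)
  also have "\<dots> = us * (\<Sum>k<i. K1f q n (i - Suc k)) + vs * q * q * inverse a * (\<Sum>k<i. K0f q n (i - Suc k))"
    by (simp add: sum.distrib sum_distrib_left)
  also have "\<dots> = us * (\<Sum>k<i. K1f q n k) + vs * q * q * inverse a * (\<Sum>k<i. K0f q n k)"
    by (simp only: sum.nat_diff_reindex)
  finally show ?thesis .
qed

fun zp :: "(nat \<Rightarrow> 'a) \<Rightarrow> (nat \<Rightarrow> 'a \<Rightarrow> 'a) \<Rightarrow> 'a \<Rightarrow> nat \<Rightarrow> 'a::field" where
  "zp Z C a 0 = 1"
| "zp Z C a (Suc i) = Z (Suc i) - C (Suc i) a * zp Z C a i"

fun pp :: "(nat \<Rightarrow> 'a) \<Rightarrow> (nat \<Rightarrow> 'a poly) \<Rightarrow> nat \<Rightarrow> 'a::field poly" where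
  "pp Z Q 0 = 1"
| "pp Z Q (Suc i) = monom (Z (Suc i)) (Suc i) - Q (Suc i) * pp Z Q i"

lemma pp_poly:
  assumes QC: "\<And>i. 1 \<le> i \<Longrightarrow> i \<le> N \<Longrightarrow> a * C i a = poly (Q i) a" and a: "a \<noteq> 0"
  shows "i \<le> N \<Longrightarrow> poly (pp Z Q i) a = a ^ i * zp Z C a i"
proof (induction i)
  case 0 then show ?case by simp
next
  case (Suc i)
  then have IH: "poly (pp Z Q i) a = a ^ i * zp Z C a i" by simp
  have "poly (pp Z Q (Suc i)) a = Z (Suc i) * a ^ Suc i - poly (Q (Suc i)) a * poly (pp Z Q i) a"
    by (simp add: poly_monom)
  also have "\<dots> = Z (Suc i) * a ^ Suc i - (a * C (Suc i) a) * (a ^ i * zp Z C a i)"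
    using QC[of "Suc i"] Suc.prems IH by simp
  also have "\<dots> = a ^ Suc i * zp Z C a (Suc i)" by (simp add: algebra_simps)
  finally show ?case .
qed

lemma pp_deg:
  assumes QD: "\<And>i. 1 \<le> i \<Longrightarrow> i \<le> N \<Longrightarrow> degree (Q i) = 2 \<and> coeff (Q i) 0 \<noteq> 0"
  shows "i \<le> N \<Longrightarrow> degree (pp Z Q i) = 2 * i \<and> coeff (pp Z Q i) 0 \<noteq> 0"
proof (induction i)
  case 0 then show ?case by simp
next
  case (Suc i)
  then have IH: "degree (pp Z Q i) = 2 * i" "coeff (pp Z Q i) 0 \<noteq> 0" by auto
  have Q: "degree (Q (Suc i)) = 2" "coeff (Q (Suc i)) 0 \<noteq> 0" using QD[of "Suc i"] Suc.prems by auto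
  have nz1: "pp Z Q i \<noteq> 0" using IH(2) by auto
  have nz2: "Q (Suc i) \<noteq> 0" using Q(2) by auto
  have dm: "degree (Q (Suc i) * pp Z Q i) = 2 + 2 * i" using degree_mult_eq[OF nz2 nz1] Q IH by simp
  have dmo: "degree (monom (Z (Suc i)) (Suc i)) < degree (- (Q (Suc i) * pp Z Q i))"
    using degree_monom_le[of "Z (Suc i)" "Suc i"] dm by simp
  have "degree (pp Z Q (Suc i)) = degree (monom (Z (Suc i)) (Suc i) + - (Q (Suc i) * pp Z Q i))" by simp
  also have "\<dots> = degree (- (Q (Suc i) * pp Z Q i))" by (rule degree_add_eq_right[OF dmo])
  also have "\<dots> = 2 * Suc i" using dm by simp
  finally have d: "degree (pp Z Q (Suc i)) = 2 * Suc i" .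
  have "coeff (pp Z Q (Suc i)) 0 = - (coeff (Q (Suc i)) 0 * coeff (pp Z Q i) 0)"
    by (simp add: coeff_monom coeff_mult_0)
  then have "coeff (pp Z Q (Suc i)) 0 \<noteq> 0" using Q(2) IH(2) by simp
  with d show ?case by simp
qed

lemma main_ex:
  fixes q u v us vs :: "'a::field" and \<zeta> :: "nat \<Rightarrow> 'a"
  assumes alg_closed: "\<forall>p :: 'a poly. 0 < degree p \<longrightarrow> (\<exists>x. poly p x = 0)"
    and q: "q \<noteq> 0" "q ^ 2 \<noteq> 1" and nz: "u \<noteq> 0" "v \<noteq> 0" "us \<noteq> 0" "vs \<noteq> 0"
  shows "feasible q d \<Longrightarrow> \<zeta> 0 = 1 \<Longrightarrow> \<exists>as. length as = d \<and> (\<forall>\<alpha>\<in>set as. \<alpha> \<noteq> 0) \<and>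
           (\<forall>i\<le>d. split_seq q u v us vs as i = \<zeta> i)"
proof (induction d arbitrary: \<zeta>)
  case 0 then show ?case by (intro exI[of _ "[]"]) (auto simp: split_0)
next
  case (Suc n)
  define S0 where "S0 i = (\<Sum>k<i. K0f q n k)" for i
  define S1 where "S1 i = (\<Sum>k<i. K1f q n k)" for i
  define C where "C i a = SB q us vs a n (i-1) i * SA q u v a n i" for i a
  define Q where "Q i = [: vs*q*q*S0 i, us*S1 i :] * [: v*q*S1 i, u*inverse q*S0 i :]" for i
  have fe: "q ^ (2*i) \<noteq> 1" if "1 \<le> i" "i \<le> Suc n" for i
    using Suc.prems(1) that unfolding feasible_def by auto
  have Snz: "S0 i \<noteq> 0 \<and> S1 i \<noteq> 0" if "1 \<le> i" "i \<le> Suc n" for i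
    using K0sum_nz[OF q that(2) fe[OF that]] K1sum_nz[OF q that(2) fe[OF that]]
    unfolding S0_def S1_def by auto
  have QC: "a * C i a = poly (Q i) a" if "a \<noteq> 0" for a i
  proof -
    have "a * C i a = (a * us * S1 i + vs * q * q * (a * inverse a) * S0 i) * (a * (u * inverse q * S0 i) + v * q * S1 i)"
      unfolding C_def SA_eq SB_eq S0_def S1_def by (simp add: algebra_simps)
    also have "\<dots> = poly (Q i) a" using that by (simp add: Q_def algebra_simps)
    finally show ?thesis .
  qed
  have QD: "degree (Q i) = 2 \<and> coeff (Q i) 0 \<noteq> 0" if "1 \<le> i" "i \<le> Suc n" for i
  proof -
    have s: "S0 i \<noteq> 0" "S1 i \<noteq> 0" using Snz[OF that] by auto
    have p1: "[: vs*q*q*S0 i, us*S1 i :] \<noteq> 0" "degree [: vs*q*q*S0 i, us*S1 i :] = 1"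
      using s nz by auto
    have p2: "[: v*q*S1 i, u*inverse q*S0 i :] \<noteq> 0" "degree [: v*q*S1 i, u*inverse q*S0 i :] = 1"
      using s nz q by auto
    have "degree (Q i) = 2" unfolding Q_def using degree_mult_eq[OF p1(1) p2(1)] p1(2) p2(2) by simp
    moreover have "coeff (Q i) 0 \<noteq> 0" unfolding Q_def coeff_mult_0 using s nz q by simp
    ultimately show ?thesis ..
  qed
  define P where "P = pp \<zeta> Q (Suc n)"
  have PD: "degree P = 2 * Suc n" "coeff P 0 \<noteq> 0"
    using pp_deg[where N="Suc n" and Q=Q and Z=\<zeta> and i="Suc n"] QD unfolding P_def by auto
  obtain r where r: "poly P r = 0" using alg_closed PD(1) by (metis zero_less_Suc mult_pos_pos zero_less_numeral)
  have r0: "r \<noteq> 0"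
  proof
    assume "r = 0" with r PD(2) show False by (simp add: poly_0_coeff_0)
  qed
  have "poly P r = r ^ Suc n * zp \<zeta> C r (Suc n)"
    unfolding P_def by (rule pp_poly[where N="Suc n" and a=r and C=C and Q=Q]) (use QC r0 in auto)
  with r r0 have zl: "zp \<zeta> C r (Suc n) = 0" by simp
  have fn: "feasible q n" using Suc.prems(1) unfolding feasible_def by auto
  obtain as' where as': "length as' = n" "\<forall>\<alpha>\<in>set as'. \<alpha> \<noteq> 0"
      "\<forall>i\<le>n. split_seq q u v us vs as' i = zp \<zeta> C r i"
    using Suc.IH[OF fn, of "zp \<zeta> C r"] by auto
  show ?case
  proof (intro exI[of _ "r # as'"] conjI allI impI)
    show "length (r # as') = Suc n" using as' by simp
    show "\<forall>\<alpha>\<in>set (r # as'). \<alpha> \<noteq> 0" using as' r0 by simp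
    fix i assume i: "i \<le> Suc n"
    show "split_seq q u v us vs (r # as') i = \<zeta> i"
    proof (cases i)
      case 0 then show ?thesis using Suc.prems(2) by (simp add: split_0)
    next
      case (Suc j)
      have rec: "split_seq q u v us vs (r # as') i = split_seq q u v us vs as' i + C i r * split_seq q u v us vs as' j"
        using split_rec[OF q(1), of i u v us vs r as'] Suc as'(1) unfolding C_def by simp
      show ?thesis
      proof (cases "i \<le> n")
        case True
        then show ?thesis using rec as'(3) Suc by simp
      next
        case False
        then have "i = Suc n" "j = n" using i Suc by auto
        moreover have "split_seq q u v us vs as' i = 0" using split_zero[of as' i] False as'(1) by simp
        ultimately show ?thesis using rec as'(3) zl by simp
      qed
    qed
  qed
qed

theorem proposition7p2:
  fixes q b c bs cs u v us vs :: "'a::field"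
    and d :: nat and \<zeta> :: "nat \<Rightarrow> 'a"
  assumes alg_closed: "\<forall>p :: 'a poly. 0 < degree p \<longrightarrow> (\<exists>x. poly p x = 0)"
    and q_nz: "q \<noteq> 0" and q_sq: "q ^ 2 \<noteq> 1"
    and nz: "b \<noteq> 0" "c \<noteq> 0" "bs \<noteq> 0" "cs \<noteq> 0"
    and uv: "u * vs = - b * bs * inverse q * (q - inverse q) ^ 2"
    and vu: "v * us = - c * cs * inverse q * (q - inverse q) ^ 2"
    and feas: "feasible q d"
    and z0: "\<zeta> 0 = 1"
  shows "\<exists>as :: 'a list. length as = d \<and> (\<forall>\<alpha>\<in>set as. \<alpha> \<noteq> 0) \<and>
           (\<forall>i\<le>d. split_seq q u v us vs as i = \<zeta> i)"
proof -
  have qq: "q - inverse q \<noteq> 0"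
  proof
    assume "q - inverse q = 0"
    then have "q * q = inverse q * q" by simp
    then have "q ^ 2 = 1" using q_nz by (simp add: power2_eq_square)
    with q_sq show False by simp
  qed
  have "u * vs \<noteq> 0" unfolding uv using nz q_nz qq by simp
  then have u: "u \<noteq> 0" and vs: "vs \<noteq> 0" by auto
  have "v * us \<noteq> 0" unfolding vu using nz q_nz qq by simp
  then have v: "v \<noteq> 0" and us: "us \<noteq> 0" by auto
  show ?thesis using main_ex[where q=q and u=u and v=v and us=us and vs=vs and d=d and \<zeta>=\<zeta>] alg_closed q_nz q_sq u v us vs feas z0 by blast
qed

end
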